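(* In the supercuspidal setting below, let $p$ be odd, $L/\mathbb Q_p$ unramified, $k=c_0\ge2$, assume $k\ge10$ or $p\ge10$, and let $\psi$ be a nontrivial Dirichlet character modulo $p^k$. Suppose that for some $i\in\{1,2,3\}$ and some $1\le j\le k$ we have $v_p(a_i)=j$. Then $\widehat H(\psi,a_1,a_2,a_3)=0$ unless $\psi$ has conductor $p^{k-j}$ and $v_p(a_1)=v_p(a_2)=v_p(a_3)=j$.
   Context: Supercuspidal setting: $p$ is a prime, $L/\mathbb Q_p$ a quadratic extension with ring of integers $\mathcal O_L$, ramification index $e\in\{1,2\}$, $d=v_p(\mathrm{disc}(L/\mathbb Q_p))$; $\eta_L$ is the nontrivial quadratic character of $\mathbb Q_p^\times$ trivial on $\mathrm{Nm}(L^\times)$. $\xi$ is a character of $L^\times$ with $\xi\neq\xi\circ(\text{Galois conjugation})$ and $\xi|_{\mathbb Q_p^\times}=\eta_L$, with $(L/\mathbb Q_p,\xi)$ an admissible pair (corresponding to a trivial central character dihedral supercuspidal representation of $\mathrm{PGL}_2(\mathbb Q_p)$). $c(\xi)$ is its conductor exponent and $c_0=c(\xi)/e$. Set $\kappa=c_0$ if $L$ unramified, $\kappa=c_0+1$ if $L$ ramified. Let $\gamma$ be a fixed complex number of modulus $1$ depending only on $L$. For integers $m,n$ and $k\ge1$, $$H(m,n;p^k)=\overline\gamma\,p^{-d/2}\sum_{\substack{t\in(\mathcal O_L/p^k\mathcal O_L)^\times\\ \mathrm{Nm}(t)\equiv mn\ (p^k)}}\xi(t)\,e_{p^k}(-\mathrm{Tr}(t))$$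 if $k\ge\kappa$ and $p\nmid mn$, and $H(m,n;p^k)=0$ otherwise. For a Dirichlet character $\psi$ mod $p^k$ and integers $a_1,a_2,a_3$, $$\widehat H(\psi,a_1,a_2,a_3)=p^{-2k}\sum_{u,x_1,x_2,x_3\bmod p^k}\overline\psi(u)H(\overline u x_1x_2x_3,1;p^k)\,e_{p^k}(a_1x_1+a_2x_2+a_3x_3-ua_1a_2a_3).$$ Here $e_q(x)=\exp(2\pi i x/q)$, $\overline u$ is the inverse mod $p^k$, and Dirichlet characters vanish on non-units. *)

theory Defs
  imports "HOL-Analysis.Analysis" "HOL-Number_Theory.Number_Theory"
begin

definition ee :: "int \<Rightarrow> int \<Rightarrow> complex" where
  "ee q x = exp (2 * of_real pi * \<i> * of_int x / of_int q)"

text \<open>Model of O_L for L/Q_p unramified, p odd: O_L = Z_p[sqrt eps] with eps an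
  integer quadratic non-residue mod p.  Elements of O_L / p^k O_L are pairs (x,y)
  (meaning x + y sqrt eps) with integer coordinates taken modulo p^k.\<close>
definition Lmult :: "int \<Rightarrow> int \<times> int \<Rightarrow> int \<times> int \<Rightarrow> int \<times> int" where
  "Lmult eps s t = (fst s * fst t + eps * snd s * snd t, fst s * snd t + snd s * fst t)"

definition Lnorm :: "int \<Rightarrow> int \<times> int \<Rightarrow> int" where
  "Lnorm eps t = fst t ^ 2 - eps * snd t ^ 2"

definition Ltrace :: "int \<times> int \<Rightarrow> int" where
  "Ltrace t = 2 * fst t"

definition Lconj :: "int \<times> int \<Rightarrow> int \<times> int" where
  "Lconj t = (fst t, - snd t)"

text \<open>Data of the character xi of L^x (L unramified) with c(xi) = c, seen on
  O_L^x (on which it factors through (O_L/p^c)^x); xi(p) = eta_L(p) = -1 is forced.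
  Conditions: character of (O_L/p^c)^x (unitary, multiplicative, periodic mod p^c),
  conductor exactly p^c, restriction to Z_p^x equal to eta_L|Z_p^x = 1,
  and xi \<noteq> xi o conj (which, for L unramified, is equivalent to admissibility).\<close>
definition unr_xi :: "int \<Rightarrow> int \<Rightarrow> nat \<Rightarrow> (int \<times> int \<Rightarrow> complex) \<Rightarrow> bool" where
  "unr_xi p eps c xi \<longleftrightarrow>
     (\<forall>x y a b. xi (x + p^c * a, y + p^c * b) = xi (x, y)) \<and>
     (\<forall>s t. \<not> p dvd Lnorm eps s \<longrightarrow> \<not> p dvd Lnorm eps t \<longrightarrow>
            xi (Lmult eps s t) = xi s * xi t) \<and>
     (\<forall>t. \<not> p dvd Lnorm eps t \<longrightarrow> norm (xi t) = 1) \<and>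
     (\<forall>a. \<not> p dvd a \<longrightarrow> xi (a, 0) = 1) \<and>
     (\<exists>t. \<not> p dvd Lnorm eps t \<and> xi (Lconj t) \<noteq> xi t) \<and>
     (if c = 0 then True
      else (\<exists>x y. xi (1 + p^(c-1) * x, p^(c-1) * y) \<noteq> 1))"

text \<open>H(m,n;p^k) in the unramified case (d = 0, kappa = c0).\<close>
definition Hunr :: "int \<Rightarrow> int \<Rightarrow> (int \<times> int \<Rightarrow> complex) \<Rightarrow> complex \<Rightarrow> nat \<Rightarrow> nat
                    \<Rightarrow> int \<Rightarrow> int \<Rightarrow> complex" where
  "Hunr p eps xi \<gamma> c0 k m n =
     (if k \<ge> c0 \<and> \<not> p dvd (m * n) then
        cnj \<gamma> * (\<Sum>t\<in>{t \<in> {0..<p^k} \<times> {0..<p^k}.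
                      \<not> p dvd Lnorm eps t \<and> [Lnorm eps t = m * n] (mod p^k)}.
                    xi t * ee (p^k) (- Ltrace t))
      else 0)"

text \<open>Inverse modulo q (only used at units; arbitrary otherwise).\<close>
definition invmod :: "int \<Rightarrow> int \<Rightarrow> int" where
  "invmod q u = (SOME v. [u * v = 1] (mod q))"

definition Hhat :: "int \<Rightarrow> int \<Rightarrow> (int \<times> int \<Rightarrow> complex) \<Rightarrow> complex \<Rightarrow> nat \<Rightarrow> nat
                    \<Rightarrow> (int \<Rightarrow> complex) \<Rightarrow> int \<Rightarrow> int \<Rightarrow> int \<Rightarrow> complex" where
  "Hhat p eps xi \<gamma> c0 k \<psi> a1 a2 a3 =
     (1 / of_int p ^ (2 * k)) *
     (\<Sum>u\<in>{0..<p^k}. \<Sum>x1\<in>{0..<p^k}. \<Sum>x2\<in>{0..<p^k}. \<Sum>x3\<in>{0..<p^k}.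
        cnj (\<psi> u) * Hunr p eps xi \<gamma> c0 k (invmod (p^k) u * x1 * x2 * x3) 1
        * ee (p^k) (a1 * x1 + a2 * x2 + a3 * x3 - u * a1 * a2 * a3))"

definition dirichlet_char :: "int \<Rightarrow> (int \<Rightarrow> complex) \<Rightarrow> bool" where
  "dirichlet_char q \<psi> \<longleftrightarrow>
     (\<forall>a. \<psi> (a + q) = \<psi> a) \<and> (\<forall>a b. \<psi> (a * b) = \<psi> a * \<psi> b) \<and> \<psi> 1 = 1 \<and>
     (\<forall>a. \<not> coprime a q \<longrightarrow> \<psi> a = 0)"

definition dchar_conductor :: "int \<Rightarrow> (int \<Rightarrow> complex) \<Rightarrow> int" where
  "dchar_conductor q \<psi> =
     (LEAST d. d > 0 \<and> d dvd q \<and> (\<forall>a. coprime a q \<and> [a = 1] (mod d) \<longrightarrow> \<psi> a = 1))"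

end

theory Submission
  imports Defs
begin

lemma ee_add: "ee q (x + y) = ee q x * ee q y"
  unfolding ee_def by (simp add: ring_distribs add_divide_distrib exp_add)

lemma ee_int: "q \<noteq> 0 \<Longrightarrow> ee q (q * m) = 1"
proof -
  assume q: "q \<noteq> 0"
  have "ee q (q*m) = exp (2 * of_real pi * \<i> * of_int m)"
    unfolding ee_def using q by (simp add: field_simps)
  also have "\<dots> = 1" unfolding exp_eq_1 by (auto intro!: exI[of _ m])
  finally show ?thesis .
qed

lemma ee_cong: "q \<noteq> 0 \<Longrightarrow> [x = y] (mod q) \<Longrightarrow> ee q x = ee q y"
proof -
  assume q: "q \<noteq> 0" and c: "[x = y] (mod q)"
  then obtain m where "y = x + q * m" by (auto simp: cong_iff_lin)
  then show ?thesis using ee_add ee_int[OF q] by simp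
qed

lemma ee_scale: "d \<noteq> 0 \<Longrightarrow> ee (d * M) (d * b) = ee M b"
  unfolding ee_def by (simp add: mult.assoc)

lemma ee_pow: "ee M (b * int s) = ee M b ^ s"
proof -
  have "ee M (b * int s) = exp (of_nat s * (2 * of_real pi * \<i> * of_int b / of_int M))"
    unfolding ee_def by (simp add: field_simps)
  also have "\<dots> = ee M b ^ s" unfolding ee_def by (rule exp_of_nat_mult)
  finally show ?thesis .
qed

lemma root_sum:
  assumes M: "M > 0" and nd: "\<not> M dvd b"
  shows "(\<Sum>s<nat M. ee M (b * int s)) = 0"
proof -
  define z where "z = ee M b"
  have zN: "z ^ nat M = 1" unfolding z_def ee_pow[symmetric] using M
    by (simp add: ee_int[of M b, simplified mult.commute] mult.commute)
  define r where "r = b mod M"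
  have r0: "0 < r" "r < M" using M nd pos_mod_sign[of M b] pos_mod_bound[of M b] unfolding r_def
    by (auto simp: dvd_eq_mod_eq_0 order_le_less)
  have "z = ee M r" unfolding z_def r_def using M by (intro ee_cong) (auto simp: cong_def)
  also have "\<dots> = exp (2 * complex_of_real pi * \<i> * complex_of_nat (nat r) / complex_of_nat (nat M))"
    unfolding ee_def using r0 by simp
  finally have zr: "z = \<dots>" .
  have "z \<noteq> 1"
  proof
    assume "z = 1"
    then have "nat M dvd nat r" using zr complex_root_unity_eq_1[of "nat M" "nat r"] M by simp
    then show False using r0 by (simp add: nat_dvd_not_less)
  qed
  then have "(\<Sum>s<nat M. z ^ s) = 0" using zN by (simp add: sum_gp_strict)
  then show ?thesis by (simp add: ee_pow z_def)
qed

lemma invmod_spec: "coprime u q \<Longrightarrow> [u * invmod q u = 1] (mod q)"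
  unfolding invmod_def by (rule someI_ex, rule cong_solve_coprime_int)


definition SSum :: "int \<Rightarrow> int \<Rightarrow> (int \<times> int \<Rightarrow> complex) \<Rightarrow> complex \<Rightarrow> nat
                    \<Rightarrow> (int \<Rightarrow> complex) \<Rightarrow> int \<Rightarrow> int \<Rightarrow> int \<Rightarrow> complex" where
  "SSum p eps xi \<gamma> k \<psi> a1 a2 a3 =
     (\<Sum>u\<in>{0..<p^k}. \<Sum>x1\<in>{0..<p^k}. \<Sum>x2\<in>{0..<p^k}. \<Sum>x3\<in>{0..<p^k}.
        cnj (\<psi> u) * Hunr p eps xi \<gamma> k k (invmod (p^k) u * x1 * x2 * x3) 1
        * ee (p^k) (a1 * x1 + a2 * x2 + a3 * x3 - u * a1 * a2 * a3))"

lemma Hhat_SSum: "Hhat p eps xi \<gamma> k k \<psi> a1 a2 a3 = (1 / of_int p ^ (2 * k)) * SSum p eps xi \<gamma> k \<psi> a1 a2 a3"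
  unfolding Hhat_def SSum_def by simp

lemma SSum_swap12: "SSum p eps xi \<gamma> k \<psi> a1 a2 a3 = SSum p eps xi \<gamma> k \<psi> a2 a1 a3"
  unfolding SSum_def
  apply (rule sum.cong[OF refl])
  apply (rule trans[OF sum.swap])
  apply (intro sum.cong refl)
  apply (simp add: ac_simps)
  done

lemma SSum_swap23: "SSum p eps xi \<gamma> k \<psi> a1 a2 a3 = SSum p eps xi \<gamma> k \<psi> a1 a3 a2"
  unfolding SSum_def
  apply (rule sum.cong[OF refl])
  apply (rule sum.cong[OF refl])
  apply (rule trans[OF sum.swap])
  apply (intro sum.cong refl)
  apply (simp add: ac_simps)
  done

lemma sum_swap5:
  "(\<Sum>s\<in>S. \<Sum>u\<in>A. \<Sum>x1\<in>B. \<Sum>x2\<in>C. \<Sum>x3\<in>D. f s u x1 x2 x3) =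
   (\<Sum>u\<in>A. \<Sum>x1\<in>B. \<Sum>x2\<in>C. \<Sum>x3\<in>D. \<Sum>s\<in>S. f s u x1 x2 x3)"
  apply (rule trans[OF sum.swap])
  apply (rule sum.cong[OF refl])
  apply (rule trans[OF sum.swap])
  apply (rule sum.cong[OF refl])
  apply (rule trans[OF sum.swap])
  apply (rule sum.cong[OF refl])
  apply (rule sum.swap)
  done

context
  fixes p eps :: int and xi :: "int \<times> int \<Rightarrow> complex" and \<gamma> :: complex and k :: nat
    and \<psi> :: "int \<Rightarrow> complex"
  assumes pp: "prime p" and k1: "k \<ge> 1" and dc: "dirichlet_char (p^k) \<psi>"
begin

abbreviation "q \<equiv> p^k"
abbreviation "F m \<equiv> Hunr p eps xi \<gamma> k k m 1"

lemma q_pos: "q > 0" using pp by (simp add: prime_gt_0_int)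

lemma psi_per_nat: "\<psi> (a + q * int n) = \<psi> a"
proof (induction n arbitrary: a)
  case 0 then show ?case by simp
next
  case (Suc n)
  have "\<psi> (a + q * int (Suc n)) = \<psi> ((a + q * int n) + q)" by (simp add: algebra_simps)
  also have "\<dots> = \<psi> (a + q * int n)" using dc unfolding dirichlet_char_def by blast
  finally show ?case using Suc by simp
qed

lemma psi_per: "\<psi> (a + q * m) = \<psi> a"
proof (cases "m \<ge> 0")
  case True then show ?thesis using psi_per_nat[of a "nat m"] by simp
next
  case False
  then have "\<psi> ((a + q * m) + q * int (nat (-m))) = \<psi> (a + q * m)" by (rule_tac psi_per_nat)
  then show ?thesis using False by simp
qed

lemma psi_cong: "[a = b] (mod q) \<Longrightarrow> \<psi> a = \<psi> b"
  by (metis cong_iff_lin psi_per)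

lemma psi_mult: "\<psi> (a * b) = \<psi> a * \<psi> b"
  using dc unfolding dirichlet_char_def by blast

lemma coprime_q: "coprime a q \<longleftrightarrow> coprime a p"
  using k1 by (simp add: coprime_power_right_iff)

lemma psi_nonunit: "\<not> coprime a p \<Longrightarrow> \<psi> a = 0"
  using dc coprime_q unfolding dirichlet_char_def by blast

lemma psi_one_coprime: "\<psi> a = 1 \<Longrightarrow> coprime a p"
  using psi_nonunit by force

lemma coprime_p_iff: "coprime a p \<longleftrightarrow> \<not> p dvd a"
  using pp by (metis coprime_commute prime_imp_coprime coprime_absorb_right prime_def zdvd1_eq 
      not_prime_unit)

lemma F_cong: "[m = m'] (mod q) \<Longrightarrow> F m = F m'"
proof -
  assume c: "[m = m'] (mod q)"
  have pq: "p dvd q" using k1 by (simp add: dvd_power)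
  have d: "p dvd m \<longleftrightarrow> p dvd m'" using cong_dvd_modulus[OF c pq] cong_dvd_iff by blast
  have "\<And>t. [Lnorm eps t = m] (mod q) \<longleftrightarrow> [Lnorm eps t = m'] (mod q)"
    using c cong_trans cong_sym by blast
  then show ?thesis unfolding Hunr_def using d by simp
qed

lemma F_nonunit: "p dvd m \<Longrightarrow> F m = 0"
  unfolding Hunr_def by simp


lemma q_ne: "q \<noteq> 0" using q_pos by linarith

lemma q_gt1: "q > 1"
  using pp k1 by (simp add: one_less_power prime_gt_1_int)

lemma bij_mul:
  assumes "coprime t p"
  shows "bij_betw (\<lambda>x. x * t mod q) {0..<q} {0..<q}"
proof -
  obtain t' where t': "[t * t' = 1] (mod q)" using cong_solve_coprime_int assms coprime_q by blast
  have tt: "t * t' mod q = 1" using t' q_gt1 unfolding cong_def by simp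
  have inv: "(a * s mod q) * s' mod q = a" if "a \<in> {0..<q}" "s * s' mod q = 1" for a s s'
  proof -
    have "(a * s mod q) * s' mod q = (a * (s * s' mod q)) mod q" by (simp add: mod_simps mult.assoc)
    also have "\<dots> = a" using that by simp
    finally show ?thesis .
  qed
  have tt': "t' * t mod q = 1" using tt by (simp add: mult.commute)
  show ?thesis
    apply (rule bij_betw_byWitness[where f'="\<lambda>x. x * t' mod q"])
    using inv tt tt' q_pos by auto
qed

lemma SSum_reindex:
  assumes t: "coprime t p"
  shows "SSum p eps xi \<gamma> k \<psi> a1 a2 a3 =
    (\<Sum>u\<in>{0..<q}. \<Sum>x1\<in>{0..<q}. \<Sum>x2\<in>{0..<q}. \<Sum>x3\<in>{0..<q}.
       cnj (\<psi> (u*t)) * F (invmod q u * x1 * x2 * x3) *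
       ee q (a1 * x1 * t + a2 * x2 + a3 * x3 - u * t * a1 * a2 * a3))"
proof -
  define h where "h = (\<lambda>x. x * t mod q)"
  have bij: "bij_betw h {0..<q} {0..<q}" unfolding h_def by (rule bij_mul[OF t])
  have "SSum p eps xi \<gamma> k \<psi> a1 a2 a3 =
    (\<Sum>u\<in>{0..<q}. \<Sum>x1\<in>{0..<q}. \<Sum>x2\<in>{0..<q}. \<Sum>x3\<in>{0..<q}.
       cnj (\<psi> (h u)) * F (invmod q (h u) * h x1 * x2 * x3) *
       ee q (a1 * h x1 + a2 * x2 + a3 * x3 - h u * a1 * a2 * a3))"
    unfolding SSum_def
    apply (rule trans[OF sum.reindex_bij_betw[OF bij, symmetric]])
    apply (rule sum.cong[OF refl])
    apply (rule trans[OF sum.reindex_bij_betw[OF bij, symmetric]])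
    apply (rule refl)
    done
  also have "\<dots> = (\<Sum>u\<in>{0..<q}. \<Sum>x1\<in>{0..<q}. \<Sum>x2\<in>{0..<q}. \<Sum>x3\<in>{0..<q}.
       cnj (\<psi> (u*t)) * F (invmod q u * x1 * x2 * x3) *
       ee q (a1 * x1 * t + a2 * x2 + a3 * x3 - u * t * a1 * a2 * a3))"
  proof (intro sum.cong refl)
    fix u x1 x2 x3 :: int
    have ps: "\<psi> (h u) = \<psi> (u * t)" unfolding h_def by (rule psi_cong) (simp add: cong_def)
    have es: "ee q (a1 * h x1 + a2 * x2 + a3 * x3 - h u * a1 * a2 * a3) =
              ee q (a1 * x1 * t + a2 * x2 + a3 * x3 - u * t * a1 * a2 * a3)"
    proof -
      have c1: "[h x1 = x1 * t] (mod q)" "[h u = u * t] (mod q)" unfolding h_def by (simp_all add: cong_def)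
      have "[a1 * h x1 + a2 * x2 + a3 * x3 - h u * a1 * a2 * a3 =
             a1 * (x1 * t) + a2 * x2 + a3 * x3 - (u * t) * a1 * a2 * a3] (mod q)"
        by (intro cong_add cong_diff cong_mult cong_refl c1)
      then have "ee q (a1 * h x1 + a2 * x2 + a3 * x3 - h u * a1 * a2 * a3) =
             ee q (a1 * (x1 * t) + a2 * x2 + a3 * x3 - (u * t) * a1 * a2 * a3)"
        by (rule ee_cong[OF q_ne])
      then show ?thesis by (simp add: ac_simps)
    qed
    have fs: "cnj (\<psi> (u*t)) * F (invmod q (h u) * h x1 * x2 * x3) =
              cnj (\<psi> (u*t)) * F (invmod q u * x1 * x2 * x3)"
    proof (cases "coprime u p")
      case False
      then show ?thesis by (simp add: psi_mult psi_nonunit)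
    next
      case True
      have cu: "coprime (h u) q"
      proof -
        have "coprime (u*t) q" using True t by (simp add: coprime_q)
        then show ?thesis unfolding h_def using coprime_mod_left_iff[OF q_ne] by blast
      qed
      define w where "w = invmod q (h u)"
      define v where "v = invmod q u"
      have h1: "[h u * w = 1] (mod q)" unfolding w_def by (rule invmod_spec[OF cu])
      have h1': "[w * (u * t) = 1] (mod q)" using h1 unfolding h_def cong_def
        by (simp add: mod_simps mult.commute)
      have h2: "[u * v = 1] (mod q)" unfolding v_def using invmod_spec True coprime_q by blast
      have "[w * h x1 * x2 * x3 = w * (x1 * t) * x2 * x3] (mod q)"
        by (intro cong_mult cong_refl) (simp add: h_def cong_def)
      also have "[w * (x1 * t) * x2 * x3 = w * (x1 * t) * x2 * x3 * (u * v)] (mod q)"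
        using cong_mult[OF cong_refl[of "w * (x1 * t) * x2 * x3"] cong_sym[OF h2]] by simp
      also have "w * (x1 * t) * x2 * x3 * (u * v) = (w * (u * t)) * (v * x1 * x2 * x3)"
        by (simp add: ac_simps)
      also have "[(w * (u * t)) * (v * x1 * x2 * x3) = 1 * (v * x1 * x2 * x3)] (mod q)"
        by (rule cong_mult[OF h1' cong_refl])
      finally have "[w * h x1 * x2 * x3 = v * x1 * x2 * x3] (mod q)" by simp
      then show ?thesis unfolding w_def v_def using F_cong by simp
    qed
    show "cnj (\<psi> (h u)) * F (invmod q (h u) * h x1 * x2 * x3) *
       ee q (a1 * h x1 + a2 * x2 + a3 * x3 - h u * a1 * a2 * a3) =
       cnj (\<psi> (u*t)) * F (invmod q u * x1 * x2 * x3) *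
       ee q (a1 * x1 * t + a2 * x2 + a3 * x3 - u * t * a1 * a2 * a3)"
      using ps es fs by simp
  qed
  finally show ?thesis .
qed


lemma SSum_inv1:
  assumes t: "coprime t p" and d1: "q dvd a1 * (t - 1)" and dA: "q dvd a1 * a2 * a3 * (t - 1)"
  shows "SSum p eps xi \<gamma> k \<psi> a1 a2 a3 = cnj (\<psi> t) * SSum p eps xi \<gamma> k \<psi> a1 a2 a3"
proof -
  have "SSum p eps xi \<gamma> k \<psi> a1 a2 a3 =
    (\<Sum>u\<in>{0..<q}. \<Sum>x1\<in>{0..<q}. \<Sum>x2\<in>{0..<q}. \<Sum>x3\<in>{0..<q}.
       cnj (\<psi> (u*t)) * F (invmod q u * x1 * x2 * x3) *
       ee q (a1 * x1 * t + a2 * x2 + a3 * x3 - u * t * a1 * a2 * a3))"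
    by (rule SSum_reindex[OF t])
  also have "\<dots> = (\<Sum>u\<in>{0..<q}. \<Sum>x1\<in>{0..<q}. \<Sum>x2\<in>{0..<q}. \<Sum>x3\<in>{0..<q}.
       cnj (\<psi> t) * (cnj (\<psi> u) * F (invmod q u * x1 * x2 * x3) *
       ee q (a1 * x1 + a2 * x2 + a3 * x3 - u * a1 * a2 * a3)))"
  proof (intro sum.cong refl)
    fix u x1 x2 x3
    have "ee q (a1 * x1 * t + a2 * x2 + a3 * x3 - u * t * a1 * a2 * a3) =
          ee q (a1 * x1 + a2 * x2 + a3 * x3 - u * a1 * a2 * a3)"
    proof (rule ee_cong[OF q_ne])
      have "(a1 * x1 * t + a2 * x2 + a3 * x3 - u * t * a1 * a2 * a3) -
            (a1 * x1 + a2 * x2 + a3 * x3 - u * a1 * a2 * a3) =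
            x1 * (a1 * (t - 1)) - u * (a1 * a2 * a3 * (t - 1))" by (simp add: algebra_simps)
      moreover have "q dvd x1 * (a1 * (t - 1)) - u * (a1 * a2 * a3 * (t - 1))"
        by (rule dvd_diff[OF dvd_mult[OF d1] dvd_mult[OF dA]])
      ultimately show "[a1 * x1 * t + a2 * x2 + a3 * x3 - u * t * a1 * a2 * a3 =
          a1 * x1 + a2 * x2 + a3 * x3 - u * a1 * a2 * a3] (mod q)"
        unfolding cong_iff_dvd_diff by simp
    qed
    then show "cnj (\<psi> (u*t)) * F (invmod q u * x1 * x2 * x3) *
       ee q (a1 * x1 * t + a2 * x2 + a3 * x3 - u * t * a1 * a2 * a3) =
       cnj (\<psi> t) * (cnj (\<psi> u) * F (invmod q u * x1 * x2 * x3) *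
       ee q (a1 * x1 + a2 * x2 + a3 * x3 - u * a1 * a2 * a3))"
      by (simp add: psi_mult mult_ac)
  qed
  also have "\<dots> = cnj (\<psi> t) * SSum p eps xi \<gamma> k \<psi> a1 a2 a3"
    unfolding SSum_def by (simp add: sum_distrib_left)
  finally show ?thesis .
qed

lemma SSum_van1:
  assumes n: "n \<le> k" and ps: "\<And>s. \<psi> (1 + s * p^n) = 1"
    and dA: "q dvd a1 * a2 * a3 * p^n" and nd: "\<not> p^(k-n) dvd a1"
  shows "SSum p eps xi \<gamma> k \<psi> a1 a2 a3 = 0"
proof -
  define M where "M = p^(k-n)"
  have qM: "q = p^n * M" unfolding M_def using n by (simp add: power_add[symmetric])
  have Mpos: "M > 0" unfolding M_def using pp by (simp add: prime_gt_0_int)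
  have pn0: "p^n \<noteq> 0" using pp by (simp add: prime_gt_0_int)
  define G where "G u x1 x2 x3 = cnj (\<psi> u) * F (invmod q u * x1 * x2 * x3) *
       ee q (a1 * x1 + a2 * x2 + a3 * x3 - u * a1 * a2 * a3)" for u x1 x2 x3
  have each: "SSum p eps xi \<gamma> k \<psi> a1 a2 a3 =
    (\<Sum>u\<in>{0..<q}. \<Sum>x1\<in>{0..<q}. \<Sum>x2\<in>{0..<q}. \<Sum>x3\<in>{0..<q}.
       G u x1 x2 x3 * ee q (a1 * x1 * p^n * int s))" for s :: nat
  proof -
    define t where "t = 1 + int s * p^n"
    have pt: "\<psi> t = 1" unfolding t_def by (rule ps)
    have t: "coprime t p" by (rule psi_one_coprime[OF pt])
    have "SSum p eps xi \<gamma> k \<psi> a1 a2 a3 =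
    (\<Sum>u\<in>{0..<q}. \<Sum>x1\<in>{0..<q}. \<Sum>x2\<in>{0..<q}. \<Sum>x3\<in>{0..<q}.
       cnj (\<psi> (u*t)) * F (invmod q u * x1 * x2 * x3) *
       ee q (a1 * x1 * t + a2 * x2 + a3 * x3 - u * t * a1 * a2 * a3))"
      by (rule SSum_reindex[OF t])
    also have "\<dots> = (\<Sum>u\<in>{0..<q}. \<Sum>x1\<in>{0..<q}. \<Sum>x2\<in>{0..<q}. \<Sum>x3\<in>{0..<q}.
       G u x1 x2 x3 * ee q (a1 * x1 * p^n * int s))"
    proof (intro sum.cong refl)
      fix u x1 x2 x3
      have "ee q (a1 * x1 * t + a2 * x2 + a3 * x3 - u * t * a1 * a2 * a3) =
            ee q ((a1 * x1 + a2 * x2 + a3 * x3 - u * a1 * a2 * a3) + a1 * x1 * p^n * int s)"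
      proof (rule ee_cong[OF q_ne])
        have "(a1 * x1 * t + a2 * x2 + a3 * x3 - u * t * a1 * a2 * a3) -
              ((a1 * x1 + a2 * x2 + a3 * x3 - u * a1 * a2 * a3) + a1 * x1 * p^n * int s) =
              - (u * int s * (a1 * a2 * a3 * p^n))" unfolding t_def by (simp add: algebra_simps)
        moreover have "q dvd - (u * int s * (a1 * a2 * a3 * p^n))"
          using dA by simp
        ultimately show "[a1 * x1 * t + a2 * x2 + a3 * x3 - u * t * a1 * a2 * a3 =
            (a1 * x1 + a2 * x2 + a3 * x3 - u * a1 * a2 * a3) + a1 * x1 * p^n * int s] (mod q)"
          unfolding cong_iff_dvd_diff by simp
      qed
      then show "cnj (\<psi> (u*t)) * F (invmod q u * x1 * x2 * x3) *
       ee q (a1 * x1 * t + a2 * x2 + a3 * x3 - u * t * a1 * a2 * a3) =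
       G u x1 x2 x3 * ee q (a1 * x1 * p^n * int s)"
        unfolding G_def by (simp add: psi_mult pt ee_add mult_ac)
    qed
    finally show ?thesis .
  qed
  have "of_nat (nat M) * SSum p eps xi \<gamma> k \<psi> a1 a2 a3 =
        (\<Sum>s<nat M. SSum p eps xi \<gamma> k \<psi> a1 a2 a3)" by simp
  also have "\<dots> = (\<Sum>s<nat M. \<Sum>u\<in>{0..<q}. \<Sum>x1\<in>{0..<q}. \<Sum>x2\<in>{0..<q}. \<Sum>x3\<in>{0..<q}.
       G u x1 x2 x3 * ee q (a1 * x1 * p^n * int s))"
    by (rule sum.cong[OF refl], rule each)
  also have "\<dots> = (\<Sum>u\<in>{0..<q}. \<Sum>x1\<in>{0..<q}. \<Sum>x2\<in>{0..<q}. \<Sum>x3\<in>{0..<q}.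
       \<Sum>s<nat M. G u x1 x2 x3 * ee q (a1 * x1 * p^n * int s))"
    by (rule sum_swap5)
  also have "\<dots> = 0"
  proof -
    have z: "(\<Sum>s<nat M. G u x1 x2 x3 * ee q (a1 * x1 * p^n * int s)) = 0" for u x1 x2 x3
    proof (cases "p dvd x1")
      case True
      then have "G u x1 x2 x3 = 0" unfolding G_def by (simp add: F_nonunit)
      then show ?thesis by simp
    next
      case False
      have "coprime x1 p" using False coprime_p_iff by simp
      then have "coprime p x1" by (simp add: coprime_commute)
      then have cx: "coprime M x1" unfolding M_def by (simp add: coprime_power_left_iff)
      have nd': "\<not> M dvd a1 * x1" using nd cx unfolding M_def[symmetric]
        by (simp add: coprime_dvd_mult_left_iff)
      have "(\<Sum>s<nat M. ee q (a1 * x1 * p^n * int s)) = (\<Sum>s<nat M. ee M (a1 * x1 * int s))"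
        unfolding qM by (intro sum.cong refl) (metis ee_scale[OF pn0] mult.commute mult.left_commute)
      also have "\<dots> = 0" by (rule root_sum[OF Mpos nd'])
      finally show ?thesis by (simp add: sum_distrib_left[symmetric])
    qed
    then show ?thesis by simp
  qed
  finally have "of_nat (nat M) * SSum p eps xi \<gamma> k \<psi> a1 a2 a3 = 0" .
  then show ?thesis using Mpos by simp
qed


lemma SSum_inv2:
  assumes "coprime t p" "q dvd a2 * (t - 1)" "q dvd a1 * a2 * a3 * (t - 1)"
  shows "SSum p eps xi \<gamma> k \<psi> a1 a2 a3 = cnj (\<psi> t) * SSum p eps xi \<gamma> k \<psi> a1 a2 a3"
  using SSum_inv1[of t a2 a1 a3] SSum_swap12[of p eps xi \<gamma> k \<psi> a1 a2 a3] assms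
  by (simp add: mult_ac)

lemma SSum_inv3:
  assumes "coprime t p" "q dvd a3 * (t - 1)" "q dvd a1 * a2 * a3 * (t - 1)"
  shows "SSum p eps xi \<gamma> k \<psi> a1 a2 a3 = cnj (\<psi> t) * SSum p eps xi \<gamma> k \<psi> a1 a2 a3"
  using SSum_inv1[of t a3 a1 a2] SSum_swap23[of p eps xi \<gamma> k \<psi> a1 a2 a3]
    SSum_swap12[of p eps xi \<gamma> k \<psi> a1 a3 a2] assms
  by (simp add: mult_ac)

lemma SSum_van2:
  assumes "n \<le> k" "\<And>s. \<psi> (1 + s * p^n) = 1" "q dvd a1 * a2 * a3 * p^n" "\<not> p^(k-n) dvd a2"
  shows "SSum p eps xi \<gamma> k \<psi> a1 a2 a3 = 0"
  using SSum_van1[of n a2 a1 a3] SSum_swap12[of p eps xi \<gamma> k \<psi> a1 a2 a3] assms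
  by (simp add: mult_ac)

lemma SSum_van3:
  assumes "n \<le> k" "\<And>s. \<psi> (1 + s * p^n) = 1" "q dvd a1 * a2 * a3 * p^n" "\<not> p^(k-n) dvd a3"
  shows "SSum p eps xi \<gamma> k \<psi> a1 a2 a3 = 0"
  using SSum_van1[of n a3 a1 a2] SSum_swap23[of p eps xi \<gamma> k \<psi> a1 a2 a3]
    SSum_swap12[of p eps xi \<gamma> k \<psi> a1 a3 a2] assms
  by (simp add: mult_ac)


lemma core:
  assumes mj: "multiplicity p a1 = j" and j1: "1 \<le> j" and jk: "j \<le> k"
    and nt: "\<exists>b. coprime b q \<and> \<psi> b \<noteq> 1"
    and S: "SSum p eps xi \<gamma> k \<psi> a1 a2 a3 \<noteq> 0"
  shows "dchar_conductor q \<psi> = p^(k-j) \<and> multiplicity p a1 = j \<and>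
         multiplicity p a2 = j \<and> multiplicity p a3 = j"
proof -
  define P where "P d \<longleftrightarrow> (\<forall>a. coprime a q \<and> [a = 1] (mod d) \<longrightarrow> \<psi> a = 1)" for d
  define SS where "SS = SSum p eps xi \<gamma> k \<psi> a1 a2 a3"
  have SS0: "SS \<noteq> 0" using S unfolding SS_def .
  have p1: "p > 1" using pp by (simp add: prime_gt_1_int)
  have nu: "\<not> is_unit p" using p1 by auto
  have a10: "a1 \<noteq> 0" using mj j1 by auto
  have dj: "p^j dvd a1" using multiplicity_dvd[of p a1] mj by simp
  have ndj: "\<not> p^Suc j dvd a1" using power_dvd_iff_le_multiplicity[OF a10 nu, of "Suc j"] mj by simp
  have fromS: "\<psi> t = 1" if "SS = cnj (\<psi> t) * SS" for t
  proof -
    have "cnj (\<psi> t) = 1" using that SS0 by (metis mult_cancel_right2)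
    then show ?thesis by (metis complex_cnj_one complex_cnj_cnj)
  qed
  have notP1: "\<not> P 1" using nt unfolding P_def by auto
  have cop1: "coprime (1 + s * p^n) q" if "n \<ge> 1" for s n
  proof -
    have "p dvd s * p^n" using that by (simp add: dvd_power)
    then have "p dvd 1 + s * p^n \<longleftrightarrow> p dvd 1" by (rule dvd_add_left_iff)
    then have "\<not> p dvd 1 + s * p^n" using nu by auto
    then show ?thesis using coprime_q coprime_p_iff by simp
  qed
  have congn: "[1 + s * p^n = 1] (mod p^n)" for s n by (simp add: cong_def)
  have Pk: "P (p^(k-j))"
    unfolding P_def
  proof (intro allI impI)
    fix a assume a: "coprime a q \<and> [a = 1] (mod p^(k-j))"
    have "p^(k-j) dvd a - 1" using a cong_iff_dvd_diff by blast
    then have d1: "q dvd a1 * (a - 1)" using mult_dvd_mono[OF dj] jk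
      by (metis le_add_diff_inverse power_add)
    have "q dvd a1 * a2 * a3 * (a - 1)" using dvd_mult2[OF d1, of "a2 * a3"] by (simp add: mult_ac)
    then have "SS = cnj (\<psi> a) * SS" unfolding SS_def
      using SSum_inv1 d1 a coprime_q by blast
    then show "\<psi> a = 1" by (rule fromS)
  qed
  have jlt: "j < k"
  proof (rule ccontr)
    assume "\<not> j < k" then have "k - j = 0" by simp
    then show False using Pk notP1 by simp
  qed
  define n where "n = k - j - 1"
  have kn: "k - n = Suc j" unfolding n_def using jlt by simp
  have qn: "q = p^Suc j * p^n"
  proof -
    have "Suc j + n = k" unfolding n_def using jlt by simp
    then show ?thesis by (metis power_add)
  qed
  have Q: False if Pn: "P (p^n)" and dA: "q dvd a1 * a2 * a3 * p^n"
  proof (cases "n = 0")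
    case True then show False using Pn notP1 by simp
  next
    case False
    have "\<psi> (1 + s * p^n) = 1" for s
      using Pn cop1[of n s] congn[of s n] False unfolding P_def by simp
    then have "SS = 0" unfolding SS_def using SSum_van1[of n a1 a2 a3] dA ndj kn by simp
    then show False using SS0 by simp
  qed
  have psik: "\<psi> (1 + s * p^(k-j)) = 1" for s
    using Pk cop1[of "k-j" s] congn[of s "k-j"] jlt unfolding P_def by simp
  have qA: "q dvd a1 * a2 * a3 * p^(k-j)"
  proof -
    have "q dvd a1 * p^(k-j)" using mult_dvd_mono[OF dj dvd_refl] jk
      by (metis le_add_diff_inverse power_add)
    then show ?thesis using dvd_mult2[of q "a1 * p^(k-j)" "a2 * a3"] by (simp add: mult_ac)
  qed
  have kk: "k - (k - j) = j" using jk by simp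
  have d2: "p^j dvd a2"
  proof (rule ccontr)
    assume "\<not> p^j dvd a2"
    then have "SS = 0" unfolding SS_def using SSum_van2[of "k-j" a1 a2 a3] psik qA kk by simp
    then show False using SS0 by simp
  qed
  have d3: "p^j dvd a3"
  proof (rule ccontr)
    assume "\<not> p^j dvd a3"
    then have "SS = 0" unfolding SS_def using SSum_van3[of "k-j" a1 a2 a3] psik qA kk by simp
    then show False using SS0 by simp
  qed
  have nd2: "\<not> p^Suc j dvd a2"
  proof
    assume h: "p^Suc j dvd a2"
    have "P (p^n)" unfolding P_def
    proof (intro allI impI)
      fix a assume a: "coprime a q \<and> [a = 1] (mod p^n)"
      have "p^n dvd a - 1" using a cong_iff_dvd_diff by blast
      then have d1: "q dvd a2 * (a - 1)" unfolding qn by (rule mult_dvd_mono[OF h])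
      have "q dvd a1 * a2 * a3 * (a - 1)" using dvd_mult2[OF d1, of "a1 * a3"] by (simp add: mult_ac)
      then have "SS = cnj (\<psi> a) * SS" unfolding SS_def
        using SSum_inv2 d1 a coprime_q by blast
      then show "\<psi> a = 1" by (rule fromS)
    qed
    moreover have "q dvd a1 * a2 * a3 * p^n"
    proof -
      have "q dvd a2 * p^n" unfolding qn by (rule mult_dvd_mono[OF h dvd_refl])
      then show ?thesis using dvd_mult2[of q "a2 * p^n" "a1 * a3"] by (simp add: mult_ac)
    qed
    ultimately show False by (rule Q)
  qed
  have nd3: "\<not> p^Suc j dvd a3"
  proof
    assume h: "p^Suc j dvd a3"
    have "P (p^n)" unfolding P_def
    proof (intro allI impI)
      fix a assume a: "coprime a q \<and> [a = 1] (mod p^n)"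
      have "p^n dvd a - 1" using a cong_iff_dvd_diff by blast
      then have d1: "q dvd a3 * (a - 1)" unfolding qn by (rule mult_dvd_mono[OF h])
      have "q dvd a1 * a2 * a3 * (a - 1)" using dvd_mult2[OF d1, of "a1 * a2"] by (simp add: mult_ac)
      then have "SS = cnj (\<psi> a) * SS" unfolding SS_def
        using SSum_inv3 d1 a coprime_q by blast
      then show "\<psi> a = 1" by (rule fromS)
    qed
    moreover have "q dvd a1 * a2 * a3 * p^n"
    proof -
      have "q dvd a3 * p^n" unfolding qn by (rule mult_dvd_mono[OF h dvd_refl])
      then show ?thesis using dvd_mult2[of q "a3 * p^n" "a1 * a2"] by (simp add: mult_ac)
    qed
    ultimately show False by (rule Q)
  qed
  have m2: "multiplicity p a2 = j" by (rule multiplicity_eqI[OF d2 nd2])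
  have m3: "multiplicity p a3 = j" by (rule multiplicity_eqI[OF d3 nd3])
  have qA2: "q dvd a1 * a2 * a3 * p^n"
  proof -
    have "p dvd p^j" using j1 by (simp add: dvd_power)
    then have pa2: "p dvd a2" using d2 by (rule dvd_trans)
    have "q = p^j * p^n * p" unfolding n_def using jlt
      by (simp add: power_add[symmetric] power_Suc2[symmetric])
    moreover have "p^j * p^n * p dvd a1 * p^n * a2"
      by (rule mult_dvd_mono[OF mult_dvd_mono[OF dj dvd_refl] pa2])
    ultimately have "q dvd a1 * p^n * a2" by simp
    then show ?thesis using dvd_mult2[of q "a1 * p^n * a2" a3] by (simp add: mult_ac)
  qed
  have cond: "dchar_conductor q \<psi> = p^(k-j)"
    unfolding dchar_conductor_def P_def[symmetric]
  proof (rule Least_equality)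
    show "p^(k-j) > 0 \<and> p^(k-j) dvd q \<and> P (p^(k-j))"
      using Pk p1 by (simp add: le_imp_power_dvd)
  next
    fix y assume y: "y > 0 \<and> y dvd q \<and> P y"
    obtain e where e: "e \<le> k" "normalize y = p^e" using divides_primepow[OF pp, of y k] y by blast
    have ye: "y = p^e" using e y by simp
    show "p^(k-j) \<le> y"
    proof (rule ccontr)
      assume "\<not> p^(k-j) \<le> y"
      then have "e < k - j" unfolding ye using p1
        by (metis not_le power_increasing less_imp_le)
      then have "p^e dvd p^n" unfolding n_def by (intro le_imp_power_dvd) simp
      then have "P (p^n)" using y unfolding ye P_def using cong_dvd_modulus by blast
      then show False using Q qA2 by blast
    qed
  qed
  show ?thesis using cond mj m2 m3 by simp
qed

end

theorem lemma5p15: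
  fixes p eps :: int and k j :: nat and i :: nat and a :: "nat \<Rightarrow> int"
    and xi :: "int \<times> int \<Rightarrow> complex" and \<gamma> :: complex and \<psi> :: "int \<Rightarrow> complex"
  assumes "prime p" and "odd p"
    and "\<not> QuadRes p eps"
    and "unr_xi p eps k xi"
    and "norm \<gamma> = 1"
    and "k \<ge> 2" and "k \<ge> 10 \<or> p \<ge> 10"
    and "dirichlet_char (p^k) \<psi>" and "\<exists>b. coprime b (p^k) \<and> \<psi> b \<noteq> 1"
    and "i \<in> {1,2,3}" and "1 \<le> j" and "j \<le> k" and "multiplicity p (a i) = j"
    and "Hhat p eps xi \<gamma> k k \<psi> (a 1) (a 2) (a 3) \<noteq> 0"
  shows "dchar_conductor (p^k) \<psi> = p^(k-j) \<and>
         multiplicity p (a 1) = j \<and> multiplicity p (a 2) = j \<and> multiplicity p (a 3) = j"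
proof -
  have pp: "prime p" and dc: "dirichlet_char (p^k) \<psi>" and nt: "\<exists>b. coprime b (p^k) \<and> \<psi> b \<noteq> 1"
    and j1: "1 \<le> j" and jk: "j \<le> k" and mi: "multiplicity p (a i) = j" using assms by auto
  have k1: "k \<ge> 1" using assms(6) by simp
  have S: "SSum p eps xi \<gamma> k \<psi> (a 1) (a 2) (a 3) \<noteq> 0"
    using assms(14) Hhat_SSum by auto
  consider "i = 1" | "i = 2" | "i = 3" using assms(10) by auto
  then show ?thesis
  proof cases
    case 1
    show ?thesis using core[OF pp k1 dc mi[unfolded 1] j1 jk nt S] .
  next
    case 2
    have S': "SSum p eps xi \<gamma> k \<psi> (a 2) (a 1) (a 3) \<noteq> 0" using S SSum_swap12 by metis
    show ?thesis using core[OF pp k1 dc mi[unfolded 2] j1 jk nt S'] by blast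
  next
    case 3
    have S': "SSum p eps xi \<gamma> k \<psi> (a 3) (a 1) (a 2) \<noteq> 0" using S SSum_swap12 SSum_swap23 by metis
    show ?thesis using core[OF pp k1 dc mi[unfolded 3] j1 jk nt S'] by blast
  qed
qed

end
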